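(* For $i=1,2$ let $G_i$ be an $r_i$-regular graph with $n_i$ vertices. (a) If both $G_1$ and $G_2$ admit balanced labellings and $r_1r_2+r_1+r_2$ is coprime to $n_1n_2$, then $G_1\boxtimes G_2$ is $\mathbb{Z}_{n_1n_2}$-distance antimagic. (b) If $G_1$ is $\mathbb{Z}_{n_1}$-distance magic, $G_2$ is $\mathbb{Z}_{n_2}$-distance magic, $\gcd(r_1,n_2)=1$ and $\gcd(r_2,n_1)=1$, then $G_1\boxtimes G_2$ is $\mathbb{Z}_{n_1n_2}$-distance antimagic.
   Context: The strong product $G_1\boxtimes G_2$ has vertex set $V(G_1)\times V(G_2)$, with distinct $(x_1,x_2),(y_1,y_2)$ adjacent iff for each $i$ either $x_i=y_i$ or $x_iy_i\in E(G_i)$. For an $r$-regular graph $G$ with $n$ vertices, a balanced labelling is a bijection $f:V(G)\to\mathbb{Z}_n$ with $\sum_{y\in N(x)}f(y)\equiv rf(x)\pmod n$ for all $x$ ($N(x)$ the open neighbourhood). For a graph $G$ with $n$ vertices and a bijection $f:V(G)\to\mathbb{Z}_n$, the weight is $w_f(x)=\sum_{y\in N(x)} f(y)$ mod $n$; $f$ is $\mathbb{Z}_n$-distance antimagic if the weights are pairwise distinct, and $\mathbb{Z}_n$-distance magic if all weights are equal. $G$ is $\mathbb{Z}_n$-distance antimagic (resp. magic) if it admits such a labelling. *)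

theory Defs
  imports Main
begin

definition simple_graph :: "'a set \<Rightarrow> ('a \<Rightarrow> 'a \<Rightarrow> bool) \<Rightarrow> bool" where
  "simple_graph V E \<longleftrightarrow> finite V \<and> (\<forall>x y. E x y \<longrightarrow> x \<in> V \<and> y \<in> V)
     \<and> (\<forall>x y. E x y \<longrightarrow> E y x) \<and> (\<forall>x. \<not> E x x)"

definition nbhd :: "'a set \<Rightarrow> ('a \<Rightarrow> 'a \<Rightarrow> bool) \<Rightarrow> 'a \<Rightarrow> 'a set" where
  "nbhd V E x = {y \<in> V. E x y}"

definition regular :: "'a set \<Rightarrow> ('a \<Rightarrow> 'a \<Rightarrow> bool) \<Rightarrow> nat \<Rightarrow> bool" where
  "regular V E r \<longleftrightarrow> (\<forall>x \<in> V. card (nbhd V E x) = r)"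

text \<open>Z_n is represented by the integers {0..<n}, arithmetic taken mod n.\<close>

definition Zn_labelling :: "'a set \<Rightarrow> ('a \<Rightarrow> int) \<Rightarrow> bool" where
  "Zn_labelling V f \<longleftrightarrow> bij_betw f V {0..<int (card V)}"

definition weight :: "'a set \<Rightarrow> ('a \<Rightarrow> 'a \<Rightarrow> bool) \<Rightarrow> ('a \<Rightarrow> int) \<Rightarrow> 'a \<Rightarrow> int" where
  "weight V E f x = (\<Sum>y \<in> nbhd V E x. f y) mod int (card V)"

definition balanced_labelling :: "'a set \<Rightarrow> ('a \<Rightarrow> 'a \<Rightarrow> bool) \<Rightarrow> nat \<Rightarrow> ('a \<Rightarrow> int) \<Rightarrow> bool" where
  "balanced_labelling V E r f \<longleftrightarrow> Zn_labelling V f \<and>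
     (\<forall>x \<in> V. (\<Sum>y \<in> nbhd V E x. f y) mod int (card V) = (int r * f x) mod int (card V))"

definition has_balanced_labelling :: "'a set \<Rightarrow> ('a \<Rightarrow> 'a \<Rightarrow> bool) \<Rightarrow> nat \<Rightarrow> bool" where
  "has_balanced_labelling V E r \<longleftrightarrow> (\<exists>f. balanced_labelling V E r f)"

definition Zn_distance_antimagic :: "'a set \<Rightarrow> ('a \<Rightarrow> 'a \<Rightarrow> bool) \<Rightarrow> bool" where
  "Zn_distance_antimagic V E \<longleftrightarrow>
     (\<exists>f. Zn_labelling V f \<and> inj_on (weight V E f) V)"

definition Zn_distance_magic :: "'a set \<Rightarrow> ('a \<Rightarrow> 'a \<Rightarrow> bool) \<Rightarrow> bool" where
  "Zn_distance_magic V E \<longleftrightarrow>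
     (\<exists>f. Zn_labelling V f \<and> (\<forall>x \<in> V. \<forall>y \<in> V. weight V E f x = weight V E f y))"

definition strong_prod :: "('a \<Rightarrow> 'a \<Rightarrow> bool) \<Rightarrow> ('b \<Rightarrow> 'b \<Rightarrow> bool) \<Rightarrow> 'a set \<Rightarrow> 'b set
    \<Rightarrow> ('a \<times> 'b) \<Rightarrow> ('a \<times> 'b) \<Rightarrow> bool" where
  "strong_prod E1 E2 V1 V2 p q \<longleftrightarrow> p \<in> V1 \<times> V2 \<and> q \<in> V1 \<times> V2 \<and> p \<noteq> q \<and>
     (fst p = fst q \<or> E1 (fst p) (fst q)) \<and> (snd p = snd q \<or> E2 (snd p) (snd q))"

end

theory Submission
  imports Defs
begin

lemma nbhd_prod:
  assumes "simple_graph V1 E1" "simple_graph V2 E2" "x1 \<in> V1" "x2 \<in> V2"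
  shows "nbhd (V1 \<times> V2) (strong_prod E1 E2 V1 V2) (x1, x2) =
    (insert x1 (nbhd V1 E1 x1) \<times> insert x2 (nbhd V2 E2 x2)) - {(x1, x2)}"
  using assms by (auto simp: nbhd_def strong_prod_def simple_graph_def)

lemma prod_label_bij:
  fixes f1 :: "'a \<Rightarrow> int" and f2 :: "'b \<Rightarrow> int"
  assumes b1: "bij_betw f1 V1 {0..<int n1}" and b2: "bij_betw f2 V2 {0..<int n2}"
    and fin: "finite V1" "finite V2" and c: "card V1 = n1" "card V2 = n2"
  shows "bij_betw (\<lambda>(y1, y2). int n2 * f1 y1 + f2 y2) (V1 \<times> V2) {0..<int (card (V1 \<times> V2))}"
proof -
  have r1: "f1 y \<in> {0..<int n1}" if "y \<in> V1" for y using b1 that bij_betwE by blast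
  have r2: "f2 y \<in> {0..<int n2}" if "y \<in> V2" for y using b2 that bij_betwE by blast
  have inj: "inj_on (\<lambda>(y1, y2). int n2 * f1 y1 + f2 y2) (V1 \<times> V2)"
  proof (rule inj_onI, clarify)
    fix a b c d assume ab: "a \<in> V1" "b \<in> V2" "c \<in> V1" "d \<in> V2"
      and eq: "int n2 * f1 a + f2 b = int n2 * f1 c + f2 d"
    have "(int n2 * f1 a + f2 b) div int n2 = f1 a"
      using r2[OF ab(2)] by simp
    moreover have "(int n2 * f1 c + f2 d) div int n2 = f1 c"
      using r2[OF ab(4)] by simp
    ultimately have e1: "f1 a = f1 c" using eq by simp
    then have "f2 b = f2 d" using eq by simp
    then show "a = c \<and> b = d" using e1 ab b1 b2 unfolding bij_betw_def inj_on_def by blast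
  qed
  have img: "(\<lambda>(y1, y2). int n2 * f1 y1 + f2 y2) ` (V1 \<times> V2) \<subseteq> {0..<int (card (V1 \<times> V2))}"
  proof clarify
    fix a b assume ab: "a \<in> V1" "b \<in> V2"
    have A: "0 \<le> f1 a" "f1 a \<le> int n1 - 1" using r1[OF ab(1)] by auto
    have B: "0 \<le> f2 b" "f2 b < int n2" using r2[OF ab(2)] by auto
    have "int n2 * f1 a \<le> int n2 * (int n1 - 1)" using A by (simp add: mult_left_mono)
    then have "int n2 * f1 a + f2 b < int (n1 * n2)" using B by (simp add: algebra_simps)
    moreover have "0 \<le> int n2 * f1 a + f2 b" using A B by simp
    ultimately show "int n2 * f1 a + f2 b \<in> {0..<int (card (V1 \<times> V2))}"
      using c by (simp add: card_cartesian_product)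
  qed
  have "card ((\<lambda>(y1, y2). int n2 * f1 y1 + f2 y2) ` (V1 \<times> V2)) = card {0..<int (card (V1 \<times> V2))}"
    using card_image[OF inj] by simp
  then have "(\<lambda>(y1, y2). int n2 * f1 y1 + f2 y2) ` (V1 \<times> V2) = {0..<int (card (V1 \<times> V2))}"
    using img by (simp add: card_subset_eq)
  then show ?thesis using inj by (simp add: bij_betw_def)
qed

lemma sum_formula:
  fixes f1 :: "'a \<Rightarrow> int" and f2 :: "'b \<Rightarrow> int"
  assumes G1: "simple_graph V1 E1" "regular V1 E1 r1"
    and G2: "simple_graph V2 E2" "regular V2 E2 r2"
    and x: "x1 \<in> V1" "x2 \<in> V2"
  shows "(\<Sum>y \<in> nbhd (V1 \<times> V2) (strong_prod E1 E2 V1 V2) (x1, x2). (\<lambda>(y1, y2). int n2 * f1 y1 + f2 y2) y)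
    = int n2 * (int r2 * f1 x1 + (int r2 + 1) * sum f1 (nbhd V1 E1 x1))
      + (int r1 * f2 x2 + (int r1 + 1) * sum f2 (nbhd V2 E2 x2))"
proof -
  let ?g = "(\<lambda>(y1, y2). int n2 * f1 y1 + f2 y2)"
  let ?C1 = "insert x1 (nbhd V1 E1 x1)" and ?C2 = "insert x2 (nbhd V2 E2 x2)"
  have f1: "finite (nbhd V1 E1 x1)" using G1 by (simp add: simple_graph_def nbhd_def)
  have f2: "finite (nbhd V2 E2 x2)" using G2 by (simp add: simple_graph_def nbhd_def)
  have n1: "x1 \<notin> nbhd V1 E1 x1" using G1 by (simp add: simple_graph_def nbhd_def)
  have n2: "x2 \<notin> nbhd V2 E2 x2" using G2 by (simp add: simple_graph_def nbhd_def)
  have c1: "card ?C1 = r1 + 1" using G1 x f1 n1 by (simp add: regular_def)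
  have c2: "card ?C2 = r2 + 1" using G2 x f2 n2 by (simp add: regular_def)
  have fin: "finite (?C1 \<times> ?C2)" using f1 f2 by simp
  have "sum ?g (?C1 \<times> ?C2) = (\<Sum>y1\<in>?C1. \<Sum>y2\<in>?C2. int n2 * f1 y1 + f2 y2)"
    by (simp add: sum.cartesian_product)
  also have "\<dots> = (\<Sum>y1\<in>?C1. int (card ?C2) * (int n2 * f1 y1) + sum f2 ?C2)"
    by (simp add: sum.distrib)
  also have "\<dots> = int (card ?C2) * int n2 * sum f1 ?C1 + int (card ?C1) * sum f2 ?C2"
    by (simp add: sum.distrib sum_distrib_left mult.assoc)
  also have "\<dots> = (int r2 + 1) * int n2 * (f1 x1 + sum f1 (nbhd V1 E1 x1))
      + (int r1 + 1) * (f2 x2 + sum f2 (nbhd V2 E2 x2))"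
    using c1 c2 f1 f2 n1 n2 by (simp add: algebra_simps)
  finally have S: "sum ?g (?C1 \<times> ?C2) = \<dots>" .
  have "sum ?g (?C1 \<times> ?C2) = ?g (x1, x2) + sum ?g (?C1 \<times> ?C2 - {(x1, x2)})"
    using fin by (rule sum.remove) simp
  then have "sum ?g (?C1 \<times> ?C2 - {(x1, x2)}) = sum ?g (?C1 \<times> ?C2) - ?g (x1, x2)" by simp
  then show ?thesis using S nbhd_prod[OF G1(1) G2(1) x]
    by (simp add: algebra_simps)
qed

lemma core:
  fixes f1 :: "'a \<Rightarrow> int" and f2 :: "'b \<Rightarrow> int"
  assumes G1: "simple_graph V1 E1" "regular V1 E1 r1" "card V1 = n1"
    and G2: "simple_graph V2 E2" "regular V2 E2 r2" "card V2 = n2"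
    and b1: "bij_betw f1 V1 {0..<int n1}" and b2: "bij_betw f2 V2 {0..<int n2}"
    and P1: "\<And>x y. x \<in> V1 \<Longrightarrow> y \<in> V1 \<Longrightarrow>
       int n1 dvd ((int r2 * f1 x + (int r2 + 1) * sum f1 (nbhd V1 E1 x))
                 - (int r2 * f1 y + (int r2 + 1) * sum f1 (nbhd V1 E1 y))) \<Longrightarrow> x = y"
    and P2: "\<And>x y. x \<in> V2 \<Longrightarrow> y \<in> V2 \<Longrightarrow>
       int n2 dvd ((int r1 * f2 x + (int r1 + 1) * sum f2 (nbhd V2 E2 x))
                 - (int r1 * f2 y + (int r1 + 1) * sum f2 (nbhd V2 E2 y))) \<Longrightarrow> x = y"
  shows "Zn_distance_antimagic (V1 \<times> V2) (strong_prod E1 E2 V1 V2)"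
proof -
  let ?g = "(\<lambda>(y1, y2). int n2 * f1 y1 + f2 y2)"
  define T1 where "T1 x = int r2 * f1 x + (int r2 + 1) * sum f1 (nbhd V1 E1 x)" for x
  define T2 where "T2 x = int r1 * f2 x + (int r1 + 1) * sum f2 (nbhd V2 E2 x)" for x
  have fin: "finite V1" "finite V2" using G1 G2 by (auto simp: simple_graph_def)
  have lab: "Zn_labelling (V1 \<times> V2) ?g"
    unfolding Zn_labelling_def using prod_label_bij[OF b1 b2 fin G1(3) G2(3)] .
  have cd: "card (V1 \<times> V2) = n1 * n2" using G1 G2 by (simp add: card_cartesian_product)
  have W: "weight (V1 \<times> V2) (strong_prod E1 E2 V1 V2) ?g (x1, x2) = (int n2 * T1 x1 + T2 x2) mod int (n1 * n2)"
    if "x1 \<in> V1" "x2 \<in> V2" for x1 x2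
    unfolding weight_def cd T1_def T2_def
    using sum_formula[OF G1(1,2) G2(1,2) that, of n2 f1 f2] by simp
  have "inj_on (weight (V1 \<times> V2) (strong_prod E1 E2 V1 V2) ?g) (V1 \<times> V2)"
  proof (rule inj_onI, clarify)
    fix a b c d assume ab: "a \<in> V1" "b \<in> V2" "c \<in> V1" "d \<in> V2"
      and eq: "weight (V1 \<times> V2) (strong_prod E1 E2 V1 V2) ?g (a, b) = weight (V1 \<times> V2) (strong_prod E1 E2 V1 V2) ?g (c, d)"
    have "(int n2 * T1 a + T2 b) mod int (n1 * n2) = (int n2 * T1 c + T2 d) mod int (n1 * n2)"
      using eq W ab by simp
    then have D: "int n1 * int n2 dvd (int n2 * T1 a + T2 b) - (int n2 * T1 c + T2 d)"
      by (simp add: mod_eq_dvd_iff)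
    then have "int n2 dvd (int n2 * T1 a + T2 b) - (int n2 * T1 c + T2 d)"
      using dvd_mult_right by blast
    then have "int n2 dvd int n2 * (T1 a - T1 c) + (T2 b - T2 d)" by (simp add: algebra_simps)
    then have "int n2 dvd T2 b - T2 d" by (simp add: dvd_add_right_iff)
    then have bd: "b = d" using P2 ab unfolding T2_def by blast
    have "int n1 * int n2 dvd int n2 * (T1 a - T1 c)" using D bd by (simp add: algebra_simps)
    moreover have "n2 \<noteq> 0" using ab(2) G2(3) fin card_gt_0_iff by fastforce
    ultimately have "int n1 dvd T1 a - T1 c" by (simp add: mult.commute)
    then have "a = c" using P1 ab unfolding T1_def by blast
    then show "a = c \<and> b = d" using bd by simp
  qed
  then show ?thesis unfolding Zn_distance_antimagic_def using lab by blast
qed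

lemma small_dvd_eq:
  fixes f :: "'a \<Rightarrow> int"
  assumes b: "bij_betw f V {0..<int n}" and x: "x \<in> V" "y \<in> V" and d: "int n dvd f x - f y"
  shows "x = y"
proof -
  have r: "f x \<in> {0..<int n}" "f y \<in> {0..<int n}" using b x bij_betwE by blast+
  have "f x mod int n = f y mod int n" using d by (simp add: mod_eq_dvd_iff)
  then have "f x = f y" using r by simp
  then show ?thesis using b x unfolding bij_betw_def inj_on_def by blast
qed

theorem mainTheorem16:
  fixes V1 :: "'a set" and E1 :: "'a \<Rightarrow> 'a \<Rightarrow> bool"
    and V2 :: "'b set" and E2 :: "'b \<Rightarrow> 'b \<Rightarrow> bool"
    and r1 r2 n1 n2 :: nat
  assumes G1: "simple_graph V1 E1" "regular V1 E1 r1" "card V1 = n1"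
    and G2: "simple_graph V2 E2" "regular V2 E2 r2" "card V2 = n2"
  shows "(has_balanced_labelling V1 E1 r1 \<and> has_balanced_labelling V2 E2 r2 \<and>
            coprime (r1 * r2 + r1 + r2) (n1 * n2)
          \<longrightarrow> Zn_distance_antimagic (V1 \<times> V2) (strong_prod E1 E2 V1 V2))
       \<and> (Zn_distance_magic V1 E1 \<and> Zn_distance_magic V2 E2 \<and>
            gcd r1 n2 = 1 \<and> gcd r2 n1 = 1
          \<longrightarrow> Zn_distance_antimagic (V1 \<times> V2) (strong_prod E1 E2 V1 V2))"
proof (intro conjI impI)
  assume h: "has_balanced_labelling V1 E1 r1 \<and> has_balanced_labelling V2 E2 r2 \<and>
            coprime (r1 * r2 + r1 + r2) (n1 * n2)"
  then obtain f1 f2 where f1: "balanced_labelling V1 E1 r1 f1" and f2: "balanced_labelling V2 E2 r2 f2"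
    unfolding has_balanced_labelling_def by blast
  have cop: "coprime (int (r1 * r2 + r1 + r2)) (int n1)" "coprime (int (r1 * r2 + r1 + r2)) (int n2)"
    using h by (auto simp: coprime_mult_right_iff simp del: of_nat_add of_nat_mult simp add: coprime_int_iff)
  have b1: "bij_betw f1 V1 {0..<int n1}" using f1 G1 by (simp add: balanced_labelling_def Zn_labelling_def)
  have b2: "bij_betw f2 V2 {0..<int n2}" using f2 G2 by (simp add: balanced_labelling_def Zn_labelling_def)
  show "Zn_distance_antimagic (V1 \<times> V2) (strong_prod E1 E2 V1 V2)"
  proof (rule core[OF G1 G2 b1 b2])
    fix x y assume xy: "x \<in> V1" "y \<in> V1"
      and d: "int n1 dvd ((int r2 * f1 x + (int r2 + 1) * sum f1 (nbhd V1 E1 x))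
                 - (int r2 * f1 y + (int r2 + 1) * sum f1 (nbhd V1 E1 y)))"
    have "int n1 dvd sum f1 (nbhd V1 E1 x) - int r1 * f1 x"
         "int n1 dvd sum f1 (nbhd V1 E1 y) - int r1 * f1 y"
      using f1 xy G1 by (auto simp: balanced_labelling_def mod_eq_dvd_iff)
    then have "int n1 dvd (int r2 + 1) * (sum f1 (nbhd V1 E1 x) - int r1 * f1 x)
        - (int r2 + 1) * (sum f1 (nbhd V1 E1 y) - int r1 * f1 y)" by simp
    with d have "int n1 dvd ((int r2 * f1 x + (int r2 + 1) * sum f1 (nbhd V1 E1 x))
                 - (int r2 * f1 y + (int r2 + 1) * sum f1 (nbhd V1 E1 y))) - ((int r2 + 1) * (sum f1 (nbhd V1 E1 x) - int r1 * f1 x)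
        - (int r2 + 1) * (sum f1 (nbhd V1 E1 y) - int r1 * f1 y))" using dvd_diff by blast
    then have "int n1 dvd int (r1 * r2 + r1 + r2) * (f1 x - f1 y)" by (simp add: algebra_simps)
    then have "int n1 dvd f1 x - f1 y" using cop(1)
      by (metis coprime_commute coprime_dvd_mult_right_iff)
    then show "x = y" using small_dvd_eq[OF b1 xy] by blast
  next
    fix x y assume xy: "x \<in> V2" "y \<in> V2"
      and d: "int n2 dvd ((int r1 * f2 x + (int r1 + 1) * sum f2 (nbhd V2 E2 x))
                 - (int r1 * f2 y + (int r1 + 1) * sum f2 (nbhd V2 E2 y)))"
    have "int n2 dvd sum f2 (nbhd V2 E2 x) - int r2 * f2 x"
         "int n2 dvd sum f2 (nbhd V2 E2 y) - int r2 * f2 y"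
      using f2 xy G2 by (auto simp: balanced_labelling_def mod_eq_dvd_iff)
    then have "int n2 dvd (int r1 + 1) * (sum f2 (nbhd V2 E2 x) - int r2 * f2 x)
        - (int r1 + 1) * (sum f2 (nbhd V2 E2 y) - int r2 * f2 y)" by simp
    with d have "int n2 dvd ((int r1 * f2 x + (int r1 + 1) * sum f2 (nbhd V2 E2 x))
                 - (int r1 * f2 y + (int r1 + 1) * sum f2 (nbhd V2 E2 y))) - ((int r1 + 1) * (sum f2 (nbhd V2 E2 x) - int r2 * f2 x)
        - (int r1 + 1) * (sum f2 (nbhd V2 E2 y) - int r2 * f2 y))" using dvd_diff by blast
    then have "int n2 dvd int (r1 * r2 + r1 + r2) * (f2 x - f2 y)" by (simp add: algebra_simps)
    then have "int n2 dvd f2 x - f2 y" using cop(2)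
      by (metis coprime_commute coprime_dvd_mult_right_iff)
    then show "x = y" using small_dvd_eq[OF b2 xy] by blast
  qed
next
  assume h: "Zn_distance_magic V1 E1 \<and> Zn_distance_magic V2 E2 \<and> gcd r1 n2 = 1 \<and> gcd r2 n1 = 1"
  then obtain f1 f2 where f1: "Zn_labelling V1 f1" "\<forall>x \<in> V1. \<forall>y \<in> V1. weight V1 E1 f1 x = weight V1 E1 f1 y"
    and f2: "Zn_labelling V2 f2" "\<forall>x \<in> V2. \<forall>y \<in> V2. weight V2 E2 f2 x = weight V2 E2 f2 y"
    unfolding Zn_distance_magic_def by blast
  have cop: "coprime (int r2) (int n1)" "coprime (int r1) (int n2)"
    using h by (auto simp: coprime_iff_gcd_eq_1)
  have b1: "bij_betw f1 V1 {0..<int n1}" using f1 G1 by (simp add: Zn_labelling_def)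
  have b2: "bij_betw f2 V2 {0..<int n2}" using f2 G2 by (simp add: Zn_labelling_def)
  show "Zn_distance_antimagic (V1 \<times> V2) (strong_prod E1 E2 V1 V2)"
  proof (rule core[OF G1 G2 b1 b2])
    fix x y assume xy: "x \<in> V1" "y \<in> V1"
      and d: "int n1 dvd ((int r2 * f1 x + (int r2 + 1) * sum f1 (nbhd V1 E1 x))
                 - (int r2 * f1 y + (int r2 + 1) * sum f1 (nbhd V1 E1 y)))"
    have "int n1 dvd sum f1 (nbhd V1 E1 x) - sum f1 (nbhd V1 E1 y)"
      using f1(2) xy G1 by (auto simp: weight_def mod_eq_dvd_iff)
    then have "int n1 dvd (int r2 + 1) * (sum f1 (nbhd V1 E1 x) - sum f1 (nbhd V1 E1 y))" by simp
    with d have "int n1 dvd ((int r2 * f1 x + (int r2 + 1) * sum f1 (nbhd V1 E1 x))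
                 - (int r2 * f1 y + (int r2 + 1) * sum f1 (nbhd V1 E1 y))) - (int r2 + 1) * (sum f1 (nbhd V1 E1 x) - sum f1 (nbhd V1 E1 y))"
      using dvd_diff by blast
    then have "int n1 dvd int r2 * (f1 x - f1 y)" by (simp add: algebra_simps)
    then have "int n1 dvd f1 x - f1 y" using cop(1)
      by (metis coprime_commute coprime_dvd_mult_right_iff)
    then show "x = y" using small_dvd_eq[OF b1 xy] by blast
  next
    fix x y assume xy: "x \<in> V2" "y \<in> V2"
      and d: "int n2 dvd ((int r1 * f2 x + (int r1 + 1) * sum f2 (nbhd V2 E2 x))
                 - (int r1 * f2 y + (int r1 + 1) * sum f2 (nbhd V2 E2 y)))"
    have "int n2 dvd sum f2 (nbhd V2 E2 x) - sum f2 (nbhd V2 E2 y)"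
      using f2(2) xy G2 by (auto simp: weight_def mod_eq_dvd_iff)
    then have "int n2 dvd (int r1 + 1) * (sum f2 (nbhd V2 E2 x) - sum f2 (nbhd V2 E2 y))" by simp
    with d have "int n2 dvd ((int r1 * f2 x + (int r1 + 1) * sum f2 (nbhd V2 E2 x))
                 - (int r1 * f2 y + (int r1 + 1) * sum f2 (nbhd V2 E2 y))) - (int r1 + 1) * (sum f2 (nbhd V2 E2 x) - sum f2 (nbhd V2 E2 y))"
      using dvd_diff by blast
    then have "int n2 dvd int r1 * (f2 x - f2 y)" by (simp add: algebra_simps)
    then have "int n2 dvd f2 x - f2 y" using cop(2)
      by (metis coprime_commute coprime_dvd_mult_right_iff)
    then show "x = y" using small_dvd_eq[OF b2 xy] by blast
  qed
qed

end
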